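(* If $G$ is a perfect graph with demand function $f$ such that $f(v) \leq 1/\omega(v)$ for each $v\in V(G)$, where $\omega(v)$ is the size of a largest clique in $G[N[v]]$, then $G$ has an $f$-coloring.
   Context: $N[v]$ is the closed neighborhood of $v$. A demand function for a graph $G$ is a function $f: V(G)\to [0,1]\cap\mathbb{Q}$. A fractional coloring of $G$ is a function $\phi$ assigning to each $v\in V(G)$ a measurable subset $\phi(v)\subseteq[0,1]$ such that $\phi(u)\cap\phi(v)=\varnothing$ for every edge $uv$. An $f$-coloring is a fractional coloring $\phi$ with $\mu(\phi(v))\geq f(v)$ for every $v$, where $\mu$ is Lebesgue measure. *)

theory Defs
  imports "HOL-Analysis.Analysis"
begin

definition simple_graph :: "'a set \<Rightarrow> ('a \<Rightarrow> 'a \<Rightarrow> bool) \<Rightarrow> bool" where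
  "simple_graph V E \<longleftrightarrow> finite V \<and> (\<forall>u v. E u v \<longrightarrow> u \<in> V \<and> v \<in> V \<and> u \<noteq> v \<and> E v u)"

definition induced_edges :: "('a \<Rightarrow> 'a \<Rightarrow> bool) \<Rightarrow> 'a set \<Rightarrow> 'a \<Rightarrow> 'a \<Rightarrow> bool" where
  "induced_edges E S = (\<lambda>u v. E u v \<and> u \<in> S \<and> v \<in> S)"

definition is_clique :: "'a set \<Rightarrow> ('a \<Rightarrow> 'a \<Rightarrow> bool) \<Rightarrow> 'a set \<Rightarrow> bool" where
  "is_clique V E K \<longleftrightarrow> K \<subseteq> V \<and> (\<forall>u\<in>K. \<forall>v\<in>K. u \<noteq> v \<longrightarrow> E u v)"

definition clique_number :: "'a set \<Rightarrow> ('a \<Rightarrow> 'a \<Rightarrow> bool) \<Rightarrow> nat" where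
  "clique_number V E = Max {card K | K. is_clique V E K}"

definition proper_colouring :: "'a set \<Rightarrow> ('a \<Rightarrow> 'a \<Rightarrow> bool) \<Rightarrow> nat \<Rightarrow> ('a \<Rightarrow> nat) \<Rightarrow> bool" where
  "proper_colouring V E k c \<longleftrightarrow> c ` V \<subseteq> {..<k} \<and> (\<forall>u\<in>V. \<forall>v\<in>V. E u v \<longrightarrow> c u \<noteq> c v)"

definition chromatic_number :: "'a set \<Rightarrow> ('a \<Rightarrow> 'a \<Rightarrow> bool) \<Rightarrow> nat" where
  "chromatic_number V E = (LEAST k. \<exists>c. proper_colouring V E k c)"

definition perfect_graph :: "'a set \<Rightarrow> ('a \<Rightarrow> 'a \<Rightarrow> bool) \<Rightarrow> bool" where
  "perfect_graph V E \<longleftrightarrow> simple_graph V E \<and>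
     (\<forall>S\<subseteq>V. chromatic_number S (induced_edges E S) = clique_number S (induced_edges E S))"

definition closed_nbhd :: "'a set \<Rightarrow> ('a \<Rightarrow> 'a \<Rightarrow> bool) \<Rightarrow> 'a \<Rightarrow> 'a set" where
  "closed_nbhd V E v = insert v {u\<in>V. E v u}"

definition local_clique_number :: "'a set \<Rightarrow> ('a \<Rightarrow> 'a \<Rightarrow> bool) \<Rightarrow> 'a \<Rightarrow> nat" where
  "local_clique_number V E v =
     clique_number (closed_nbhd V E v) (induced_edges E (closed_nbhd V E v))"

definition demand_function :: "'a set \<Rightarrow> ('a \<Rightarrow> real) \<Rightarrow> bool" where
  "demand_function V f \<longleftrightarrow> (\<forall>v\<in>V. f v \<in> \<rat> \<and> 0 \<le> f v \<and> f v \<le> 1)"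

definition fractional_colouring :: "'a set \<Rightarrow> ('a \<Rightarrow> 'a \<Rightarrow> bool) \<Rightarrow> ('a \<Rightarrow> real set) \<Rightarrow> bool" where
  "fractional_colouring V E \<phi> \<longleftrightarrow>
     (\<forall>v\<in>V. \<phi> v \<in> sets lebesgue \<and> \<phi> v \<subseteq> {0..1}) \<and>
     (\<forall>u\<in>V. \<forall>v\<in>V. E u v \<longrightarrow> \<phi> u \<inter> \<phi> v = {})"

definition f_colouring :: "'a set \<Rightarrow> ('a \<Rightarrow> 'a \<Rightarrow> bool) \<Rightarrow> ('a \<Rightarrow> real) \<Rightarrow> ('a \<Rightarrow> real set) \<Rightarrow> bool" where
  "f_colouring V E f \<phi> \<longleftrightarrow> fractional_colouring V E \<phi> \<and>
     (\<forall>v\<in>V. measure lebesgue (\<phi> v) \<ge> f v)"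

end

theory Submission
  imports Defs
begin

lemma finite_cliques:
  assumes "finite V"
  shows "finite {K. is_clique V E K}"
proof (rule finite_subset[of _ "Pow V"])
  show "{K. is_clique V E K} \<subseteq> Pow V" by (auto simp: is_clique_def)
  show "finite (Pow V)" using assms by simp
qed

lemma base_col:
  assumes perf: "perfect_graph V E" and le1: "\<forall>u\<in>V. a u \<le> (1::nat)"
    and cl: "\<forall>K. is_clique V E K \<longrightarrow> sum a K \<le> N"
  shows "\<exists>C. \<forall>u\<in>V. C u \<subseteq> {..<N} \<and> card (C u) = a u \<and> (\<forall>w\<in>V. E u w \<longrightarrow> C u \<inter> C w = {})"
proof -
  have fin: "finite V" and sg: "\<forall>u v. E u v \<longrightarrow> u \<in> V \<and> v \<in> V \<and> u \<noteq> v \<and> E v u"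
    using perf by (auto simp: perfect_graph_def simple_graph_def)
  define S where "S = {u\<in>V. a u = 1}"
  have SV: "S \<subseteq> V" by (auto simp: S_def)
  let ?E = "induced_edges E S"
  have chi: "chromatic_number S ?E = clique_number S ?E" using perf SV by (simp add: perfect_graph_def)
  have finS: "finite S" using fin SV finite_subset by blast
  obtain g where g: "bij_betw g S {0..<card S}" using ex_bij_betw_finite_nat[OF finS] by blast
  have pcg: "proper_colouring S ?E (card S) g"
    unfolding proper_colouring_def
  proof (intro conjI ballI impI)
    show "g ` S \<subseteq> {..<card S}" using g by (auto simp: bij_betw_def)
  next
    fix u v assume "u \<in> S" "v \<in> S" "?E u v"
    then have "u \<noteq> v" using sg by (auto simp: induced_edges_def)
    then show "g u \<noteq> g v" using g \<open>u \<in> S\<close> \<open>v \<in> S\<close> by (auto simp: bij_betw_def inj_on_def)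
  qed
  have "\<exists>c. proper_colouring S ?E (LEAST k. \<exists>c. proper_colouring S ?E k c) c"
    by (rule LeastI_ex[where P="\<lambda>k. \<exists>c. proper_colouring S ?E k c"]) (rule exI[of _ "card S"], rule exI[of _ g], rule pcg)
  then obtain c where c: "proper_colouring S ?E (clique_number S ?E) c"
    using chi unfolding chromatic_number_def by auto
  have fc: "finite {card K |K. is_clique S ?E K}"
  proof -
    have "{card K |K. is_clique S ?E K} = card ` {K. is_clique S ?E K}" by auto
    then show ?thesis using finite_cliques[OF finS] by simp
  qed
  have "clique_number S ?E \<le> N"
    unfolding clique_number_def
  proof (rule Max.boundedI[OF fc])
    show "{card K |K. is_clique S ?E K} \<noteq> {}"
    proof -
      have "is_clique S ?E {}" by (simp add: is_clique_def)
      then show ?thesis by blast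
    qed
  next
    fix x assume "x \<in> {card K |K. is_clique S ?E K}"
    then obtain K where x: "x = card K" and K: "is_clique S ?E K" by auto
    have KS: "K \<subseteq> S" using K by (simp add: is_clique_def)
    have "is_clique V E K" using K SV by (auto simp: is_clique_def induced_edges_def)
    then have "sum a K \<le> N" using cl by blast
    moreover have "sum a K = card K" using KS by (simp add: S_def subset_iff)
    ultimately show "x \<le> N" using x by simp
  qed
  define C where "C u = (if u \<in> S then {c u} else {})" for u
  show ?thesis
  proof (intro exI ballI conjI impI)
    fix u assume u: "u \<in> V"
    have cS: "c ` S \<subseteq> {..<clique_number S ?E}" and cE: "\<forall>x\<in>S. \<forall>y\<in>S. ?E x y \<longrightarrow> c x \<noteq> c y"
      using c unfolding proper_colouring_def by blast+
    show "C u \<subseteq> {..<N}"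
    proof (cases "u \<in> S")
      case True
      then have "c u < clique_number S ?E" using cS by blast
      then show ?thesis using True \<open>clique_number S ?E \<le> N\<close> by (simp add: C_def)
    qed (simp add: C_def)
    show "card (C u) = a u"
    proof (cases "u \<in> S")
      case True then show ?thesis by (simp add: C_def S_def)
    next
      case False
      then have "a u \<noteq> 1" using u by (simp add: S_def)
      moreover have "a u \<le> 1" using le1 u by blast
      ultimately have "a u = 0" by linarith
      then show ?thesis using False by (simp add: C_def)
    qed
    fix w assume w: "w \<in> V" "E u w"
    show "C u \<inter> C w = {}"
    proof (cases "u \<in> S \<and> w \<in> S")
      case True
      then have "?E u w" using w by (simp add: induced_edges_def)
      then have "c u \<noteq> c w" using cE True by blast
      then show ?thesis using True by (simp add: C_def)
    next
      case False
      then show ?thesis by (auto simp: C_def)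
    qed
  qed
qed

lemma weighted_col:
  assumes perf: "perfect_graph V E"
  shows "\<forall>K. is_clique V E K \<longrightarrow> sum a K \<le> N \<Longrightarrow>
    \<exists>C. \<forall>u\<in>V. C u \<subseteq> {..<N} \<and> card (C u) = a u \<and> (\<forall>w\<in>V. E u w \<longrightarrow> C u \<inter> C w = {})"
proof (induction "sum a V" arbitrary: a N rule: less_induct)
  case less
  have fin: "finite V" and sg: "\<forall>u v. E u v \<longrightarrow> u \<in> V \<and> v \<in> V \<and> u \<noteq> v \<and> E v u"
    using perf by (auto simp: perfect_graph_def simple_graph_def)
  have cfin: "\<And>K. is_clique V E K \<Longrightarrow> finite K"
    using fin by (auto simp: is_clique_def intro: finite_subset)
  show ?case
  proof (cases "\<exists>v\<in>V. a v \<ge> 2")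
    case False
    then show ?thesis using base_col[OF perf _ less.prems] by force
  next
    case True
    then obtain v where v: "v \<in> V" "a v \<ge> 2" by blast
    define a' where "a' = a(v := a v - 1)"
    have a'v: "a' v = a v - 1" by (simp add: a'_def)
    have a'o: "\<And>u. u \<noteq> v \<Longrightarrow> a' u = a u" by (simp add: a'_def)
    have sumK: "\<And>K. finite K \<Longrightarrow> v \<in> K \<Longrightarrow> sum a K = sum a' K + 1"
    proof -
      fix K :: "'a set" assume K: "finite K" "v \<in> K"
      have "sum a K = a v + sum a (K - {v})" using K by (simp add: sum.remove)
      moreover have "sum a' K = a' v + sum a' (K - {v})" using K by (simp add: sum.remove)
      moreover have "sum a (K - {v}) = sum a' (K - {v})" by (intro sum.cong) (auto simp: a'o)
      ultimately show "sum a K = sum a' K + 1" using v a'v by simp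
    qed
    have a'le: "\<And>K. sum a' K \<le> sum a K" by (intro sum_mono) (simp add: a'_def)
    have lessV: "sum a' V < sum a V" using sumK[OF fin v(1)] by simp
    define M where "M = Max {sum a' K | K. is_clique V E K}"
    have fM: "finite {sum a' K | K. is_clique V E K}"
    proof -
      have "{sum a' K | K. is_clique V E K} = sum a' ` {K. is_clique V E K}" by auto
      then show ?thesis using finite_cliques[OF fin] by simp
    qed
    have Mge: "\<And>K. is_clique V E K \<Longrightarrow> sum a' K \<le> M"
      unfolding M_def by (rule Max_ge[OF fM]) blast
    have "M \<in> {sum a' K | K. is_clique V E K}"
      unfolding M_def
    proof (rule Max_in[OF fM])
      have "is_clique V E {}" by (simp add: is_clique_def)
      then show "{sum a' K | K. is_clique V E K} \<noteq> {}" by blast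
    qed
    then obtain K0 where K0: "is_clique V E K0" "sum a' K0 = M" by blast
    have MN: "M \<le> N" using K0 a'le[of K0] less.prems by fastforce
    have clv: "is_clique V E {v}" using v by (simp add: is_clique_def)
    have M1: "M \<ge> 1" using Mge[OF clv] v a'v by simp
    obtain C where C: "\<forall>u\<in>V. C u \<subseteq> {..<M} \<and> card (C u) = a' u \<and> (\<forall>w\<in>V. E u w \<longrightarrow> C u \<inter> C w = {})"
      using less.hyps[OF lessV, of M] Mge by blast
    have Cfin: "\<And>u. u \<in> V \<Longrightarrow> finite (C u)" using C by (meson finite_lessThan finite_subset)
    show ?thesis
    proof (cases "\<exists>K. is_clique V E K \<and> v \<in> K \<and> sum a' K = M")
      case True
      then obtain K where K: "is_clique V E K" "v \<in> K" "sum a' K = M" by blast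
      have "sum a K = M + 1" using sumK[OF cfin[OF K(1)] K(2)] K(3) by simp
      then have M1N: "M + 1 \<le> N" using less.prems K(1) by metis
      define C' where "C' u = (if u = v then insert M (C v) else C u)" for u
      show ?thesis
      proof (intro exI ballI conjI impI)
        fix u assume u: "u \<in> V"
        have "C u \<subseteq> {..<M}" "C v \<subseteq> {..<M}" using C u v by auto
        then show "C' u \<subseteq> {..<N}" using M1N by (auto simp: C'_def)
        have "M \<notin> C v" using C v by auto
        then show "card (C' u) = a u" using C u v Cfin[OF v(1)] a'v a'o by (auto simp: C'_def)
        fix w assume w: "w \<in> V" "E u w"
        have "C u \<inter> C w = {}" "M \<notin> C u" "M \<notin> C w" "u \<noteq> w" using C u w sg by auto
        then show "C' u \<inter> C' w = {}" by (auto simp: C'_def)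
      qed
    next
      case False
      note nK = False
      have "C v \<noteq> {}" using C v a'v by fastforce
      then obtain c where c: "c \<in> C v" by blast
      define A where "A = {u\<in>V. c \<in> C u}"
      define b where "b u = (if u \<in> A \<and> u \<noteq> v then a' u - 1 else a' u)" for u
      have ble: "\<And>K. sum b K \<le> sum a' K" by (intro sum_mono) (simp add: b_def)
      have bclq: "sum b K \<le> M - 1" if K: "is_clique V E K" for K
      proof (cases "sum a' K = M")
        case False
        then show ?thesis using Mge[OF K] ble[of K] by simp
      next
        case True
        have vK: "v \<notin> K" using nK K True by blast
        have KV: "K \<subseteq> V" using K by (simp add: is_clique_def)
        have "\<exists>u\<in>K. c \<in> C u"
        proof (rule ccontr)
          assume nc: "\<not> (\<exists>u\<in>K. c \<in> C u)"
          have "(\<Union>u\<in>K. C u) \<subseteq> {..<M} - {c}" using nc C KV by blast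
          then have "card (\<Union>u\<in>K. C u) \<le> card ({..<M} - {c})" by (intro card_mono) auto
          also have "\<dots> = M - 1"
          proof -
            have "c \<in> {..<M}" using c C v by blast
            then show ?thesis by (simp add: card_Diff_singleton)
          qed
          also have "card (\<Union>u\<in>K. C u) = (\<Sum>u\<in>K. card (C u))"
          proof (rule card_UN_disjoint)
            show "finite K" by (rule cfin[OF K])
            show "\<forall>i\<in>K. finite (C i)" using Cfin KV by blast
            show "\<forall>i\<in>K. \<forall>j\<in>K. i \<noteq> j \<longrightarrow> C i \<inter> C j = {}"
              using K C KV by (auto simp: is_clique_def) blast
          qed
          also have "(\<Sum>u\<in>K. card (C u)) = sum a' K" using C KV by (intro sum.cong) auto
          finally show False using True M1 by simp
        qed
        then obtain u where u: "u \<in> K" "c \<in> C u" by blast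
        have uA: "u \<in> A" "u \<noteq> v" using u KV vK by (auto simp: A_def)
        have "a' u \<ge> 1" using C u KV Cfin[of u] by (metis One_nat_def Suc_leI card_gt_0_iff empty_iff subsetD)
        have "sum b K = b u + sum b (K - {u})" using u cfin[OF K] by (simp add: sum.remove)
        also have "\<dots> \<le> b u + sum a' (K - {u})" using ble by simp
        also have "b u = a' u - 1" using uA by (simp add: b_def)
        also have "sum a' K = a' u + sum a' (K - {u})" using u cfin[OF K] by (simp add: sum.remove)
        ultimately show ?thesis using True \<open>a' u \<ge> 1\<close> by linarith
      qed
      have lessb: "sum b V < sum a V" using ble[of V] lessV by simp
      obtain D where D: "\<forall>u\<in>V. D u \<subseteq> {..<M - 1} \<and> card (D u) = b u \<and> (\<forall>w\<in>V. E u w \<longrightarrow> D u \<inter> D w = {})"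
        using less.hyps[OF lessb, of "M - 1"] bclq by blast
      define C' where "C' u = (if u \<in> A then insert (M - 1) (D u) else D u)" for u
      have vA: "v \<in> A" using v c by (simp add: A_def)
      show ?thesis
      proof (intro exI ballI conjI impI)
        fix u assume u: "u \<in> V"
        have "D u \<subseteq> {..<M - 1}" using D u by auto
        then show "C' u \<subseteq> {..<N}" using MN M1 by (auto simp: C'_def)
        have nin: "M - 1 \<notin> D u" using D u by auto
        have Dfin: "finite (D u)" using D u by (meson finite_lessThan finite_subset)
        show "card (C' u) = a u"
        proof (cases "u \<in> A")
          case True
          then have "c \<in> C u" by (simp add: A_def)
          then have "a' u \<ge> 1" using C u Cfin[OF u] by (metis One_nat_def Suc_leI card_gt_0_iff empty_iff)
          then show ?thesis using True nin Dfin D u a'v a'o v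
            by (cases "u = v") (auto simp: C'_def b_def)
        next
          case False
          then have "u \<noteq> v" using vA by auto
          then show ?thesis using D u a'o False by (auto simp: C'_def b_def)
        qed
        fix w assume w: "w \<in> V" "E u w"
        have "\<not> (u \<in> A \<and> w \<in> A)" using C u w by (auto simp: A_def)
        moreover have "D u \<inter> D w = {}" "M - 1 \<notin> D u" "M - 1 \<notin> D w" using D u w by auto
        ultimately show "C' u \<inter> C' w = {}" by (auto simp: C'_def)
      qed
    qed
  qed
qed


lemma clique_le_local:
  assumes sg: "simple_graph V E" and K: "is_clique V E K" and vK: "v \<in> K"
  shows "card K \<le> local_clique_number V E v"
proof -
  have fin: "finite V" using sg by (simp add: simple_graph_def)
  let ?N = "closed_nbhd V E v"
  have finN: "finite ?N" using fin by (simp add: closed_nbhd_def)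
  have "is_clique ?N (induced_edges E ?N) K"
  proof -
    have KN: "K \<subseteq> ?N" using K vK by (auto simp: is_clique_def closed_nbhd_def)
    then show ?thesis using K by (auto simp: is_clique_def induced_edges_def)
  qed
  moreover have "finite {card K |K. is_clique ?N (induced_edges E ?N) K}"
  proof -
    have "{card K |K. is_clique ?N (induced_edges E ?N) K} = card ` {K. is_clique ?N (induced_edges E ?N) K}" by auto
    then show ?thesis using finite_cliques[OF finN] by simp
  qed
  ultimately show ?thesis unfolding local_clique_number_def clique_number_def
    by (intro Max_ge) auto
qed

theorem theorem1p7:
  fixes V :: "'a set" and E :: "'a \<Rightarrow> 'a \<Rightarrow> bool" and f :: "'a \<Rightarrow> real"
  assumes "perfect_graph V E"
    and "demand_function V f"
    and "\<forall>v\<in>V. f v \<le> 1 / real (local_clique_number V E v)"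
  shows "\<exists>\<phi>. f_colouring V E f \<phi>"
proof -
  have sg: "simple_graph V E" using assms(1) by (simp add: perfect_graph_def)
  have fin: "finite V" using sg by (simp add: simple_graph_def)
  have "\<forall>v\<in>V. \<exists>d::nat. d > 0 \<and> f v * real d \<in> \<int>"
  proof
    fix v assume v: "v \<in> V"
    have "f v \<in> \<rat>" using assms(2) v by (simp add: demand_function_def)
    then obtain p q :: int where pq: "q > 0" "f v = of_int p / of_int q" by (rule Rats_cases') blast
    have "f v * real (nat q) = of_int p" using pq by simp
    then show "\<exists>d::nat. d > 0 \<and> f v * real d \<in> \<int>" using pq(1)
      by (intro exI[of _ "nat q"]) auto
  qed
  from bchoice[OF this] obtain d :: "'a \<Rightarrow> nat" where d: "\<forall>v\<in>V. d v > 0 \<and> f v * real (d v) \<in> \<int>"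
    by blast
  define N where "N = (\<Prod>v\<in>V. d v)"
  have Npos: "N > 0" using d fin by (simp add: N_def)
  have fN: "f v * N \<in> \<int>" if v: "v \<in> V" for v
  proof -
    have "N = d v * (\<Prod>u\<in>V - {v}. d u)" using v fin by (simp add: N_def prod.remove)
    then have eq: "f v * N = (f v * d v) * real (\<Prod>u\<in>V - {v}. d u)" by simp
    have i1: "f v * real (d v) \<in> \<int>" using d v by blast
    have i2: "real (\<Prod>u\<in>V - {v}. d u) \<in> \<int>" by (rule Ints_of_nat)
    show ?thesis unfolding eq by (rule Ints_mult[OF i1 i2])
  qed
  define a where "a v = nat \<lfloor>f v * N\<rfloor>" for v
  have fpos: "\<And>v. v \<in> V \<Longrightarrow> f v \<ge> 0" using assms(2) by (simp add: demand_function_def)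
  have aeq: "real (a v) = f v * N" if v: "v \<in> V" for v
  proof -
    obtain z where z: "f v * N = of_int z" using fN[OF v] by (auto elim: Ints_cases)
    have "0 \<le> f v * N" using fpos[OF v] by simp
    then have "z \<ge> 0" using z by simp
    then show ?thesis unfolding a_def using z by simp
  qed
  have clq: "\<forall>K. is_clique V E K \<longrightarrow> sum a K \<le> N"
  proof (intro allI impI)
    fix K assume K: "is_clique V E K"
    have KV: "K \<subseteq> V" using K by (simp add: is_clique_def)
    have finK: "finite K" using KV fin finite_subset by blast
    have "(\<Sum>v\<in>K. f v) \<le> 1"
    proof (cases "K = {}")
      case True then show ?thesis by simp
    next
      case False
      then have cK: "card K > 0" using finK by (simp add: card_gt_0_iff)
      have "\<And>v. v \<in> K \<Longrightarrow> f v \<le> 1 / real (card K)"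
      proof -
        fix v assume vK: "v \<in> K"
        have "card K \<le> local_clique_number V E v" by (rule clique_le_local[OF sg K vK])
        then have "1 / real (local_clique_number V E v) \<le> 1 / real (card K)"
          using cK by (intro divide_left_mono) auto
        moreover have "f v \<le> 1 / real (local_clique_number V E v)" using assms(3) vK KV by blast
        ultimately show "f v \<le> 1 / real (card K)" by linarith
      qed
      then have "(\<Sum>v\<in>K. f v) \<le> real (card K) * (1 / real (card K))"
        by (rule sum_bounded_above)
      then show ?thesis using cK by simp
    qed
    have "real (sum a K) = (\<Sum>v\<in>K. f v) * N"
      using aeq KV by (simp add: sum_distrib_right subset_iff)
    also have "\<dots> \<le> N" using \<open>(\<Sum>v\<in>K. f v) \<le> 1\<close> Npos
      by (simp add: mult_le_cancel_right1)
    finally show "sum a K \<le> N" by linarith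
  qed
  obtain C where C: "\<forall>u\<in>V. C u \<subseteq> {..<N} \<and> card (C u) = a u \<and> (\<forall>w\<in>V. E u w \<longrightarrow> C u \<inter> C w = {})"
    using weighted_col[OF assms(1) clq] by blast
  define I where "I i = {real i / N ..< real (Suc i) / N}" for i
  define \<phi> where "\<phi> v = (\<Union>i\<in>C v. I i)" for v
  have Idisj: "I i \<inter> I j = {}" if "i \<noteq> j" for i j
  proof -
    have "\<not> (x \<in> I i \<and> x \<in> I j)" for x
    proof
      assume x: "x \<in> I i \<and> x \<in> I j"
      then have "real i \<le> x * N" "x * N < real (Suc i)" "real j \<le> x * N" "x * N < real (Suc j)"
        using Npos by (auto simp: I_def field_simps)
      then show False using that by linarith
    qed
    then show ?thesis by blast
  qed
  have Imeas: "measure lebesgue (I i) = 1 / N" for i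
    using Npos by (simp add: I_def divide_right_mono diff_divide_distrib[symmetric])
  show ?thesis
  proof (intro exI[of _ \<phi>])
    show "f_colouring V E f \<phi>"
      unfolding f_colouring_def fractional_colouring_def
    proof (intro conjI ballI impI)
      fix v assume v: "v \<in> V"
      have Cv: "C v \<subseteq> {..<N}" using C v by blast
      then have finC: "finite (C v)" using finite_subset by blast
      show "\<phi> v \<in> sets lebesgue" unfolding \<phi>_def I_def using finC by (intro sets.finite_UN) auto
      show "\<phi> v \<subseteq> {0..1}"
      proof
        fix x assume "x \<in> \<phi> v"
        then obtain i where i: "i \<in> C v" "x \<in> I i" by (auto simp: \<phi>_def)
        have "i < N" using i Cv by auto
        then have "real (Suc i) / N \<le> 1" using Npos by (simp add: field_simps)
        moreover have "0 \<le> real i / N" by simp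
        moreover have "real i / N \<le> x" "x < real (Suc i) / N" using i by (auto simp: I_def)
        ultimately show "x \<in> {0..1}" by (simp only: atLeastAtMost_iff) linarith
      qed
      have "measure lebesgue (\<phi> v) = (\<Sum>i\<in>C v. measure lebesgue (I i))"
        unfolding \<phi>_def
      proof (rule measure_finite_Union[OF finC])
        show "I ` C v \<subseteq> sets lebesgue" by (auto simp: I_def)
        show "disjoint_family_on I (C v)" using Idisj by (auto simp: disjoint_family_on_def)
        fix i show "emeasure lebesgue (I i) \<noteq> \<infinity>"
          using Npos by (simp add: I_def divide_right_mono)
      qed
      also have "\<dots> = real (card (C v)) / N" using Imeas by simp
      also have "\<dots> = f v" using C v aeq[OF v] Npos by simp
      finally show "f v \<le> measure lebesgue (\<phi> v)" by simp
    next
      fix u w assume u: "u \<in> V" and w: "w \<in> V" and e: "E u w"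
      have "C u \<inter> C w = {}" using C u w e by blast
      show "\<phi> u \<inter> \<phi> w = {}"
      proof (rule ccontr)
        assume "\<phi> u \<inter> \<phi> w \<noteq> {}"
        then obtain x i j where ij: "i \<in> C u" "j \<in> C w" "x \<in> I i" "x \<in> I j"
          unfolding \<phi>_def by auto
        have "i \<noteq> j" using ij \<open>C u \<inter> C w = {}\<close> by auto
        then have "I i \<inter> I j = {}" by (rule Idisj)
        then show False using ij by auto
      qed
    qed
  qed
qed

end
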